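(* Let $K=3$. There exist a constant $c>0$ and, for infinitely many $T$, a sequence of outcomes $\mathbf x\in[3]^T$ and forecasts $\mathbf p\in\Delta_3^T$ such that $\mathrm{Cal}(\mathbf p^{(i)},\mathbf x^{(i)})=0$ for each $i\in\{1,2,3\}$, but $\mathrm{MaxAgentReg}(\mathbf p,\mathbf x)\ge cT$.
   Context: $\Delta_K$ is the probability simplex in $\mathbb R^K$, outcome $i$ identified with $e_i$. For $\mathbf p\in\Delta_K^T$, $\mathbf x\in[K]^T$ and $i\in[K]$, define the binary sequences $\mathbf p^{(i)}\in[0,1]^T$ by $p^{(i)}_t=(p_t)_i$ and $\mathbf x^{(i)}\in\{0,1\}^T$ by $x^{(i)}_t=\mathbf 1(x_t=i)$. Binary calibration error: for $\mathbf q\in[0,1]^T$, $\mathbf y\in\{0,1\}^T$, $\mathrm{Cal}(\mathbf q,\mathbf y)=\sum_q|q\,n_q-m_q|$ with $n_q=|\{t:q_t=q\}|$, $m_q=|\{t:q_t=q,y_t=1\}|$. A multiclass scoring rule $\ell:\Delta_K\times[K]\to\mathbb R$ with $\ell(p;q)=\sum_iq_i\ell(p,i)$ is proper if $\ell(p;p)\le\ell(p';p)$ for all $p,p'$; $\mathcal L$ is the set of proper ones with values in $[-1,1]$. With $\beta=\frac1T\sum_te_{x_t}$, $\mathrm{Reg}_\ell(\mathbf p,\mathbf x)=\sum_t\ell(p_t,x_t)-\sum_t\ell(\beta,x_t)$ and $\mathrm{MaxAgentReg}(\mathbf p,\mathbf x)=\sup_{\ell\in\mathcal L}\mathrm{Reg}_\ell(\mathbf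 p,\mathbf x)$. *)

theory Defs
  imports Complex_Main
begin

text \<open>Outcomes [K] are represented by the naturals 0..K-1; a point of the simplex
  Delta_K is a function nat => real, nonnegative on {..<K}, summing to 1 there, and
  zero outside {..<K}. Sequences of length T are functions on nat, only the values
  at t < T matter.\<close>

definition simplex :: "nat \<Rightarrow> (nat \<Rightarrow> real) set" where
  "simplex K = {p. (\<forall>i<K. 0 \<le> p i) \<and> (\<Sum>i<K. p i) = 1 \<and> (\<forall>i\<ge>K. p i = 0)}"

definition Cal :: "nat \<Rightarrow> (nat \<Rightarrow> real) \<Rightarrow> (nat \<Rightarrow> bool) \<Rightarrow> real" where
  "Cal T q y = (\<Sum>v\<in>q ` {..<T}.
      \<bar>v * real (card {t\<in>{..<T}. q t = v}) - real (card {t\<in>{..<T}. q t = v \<and> y t})\<bar>)"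

definition exp_score :: "nat \<Rightarrow> ((nat \<Rightarrow> real) \<Rightarrow> nat \<Rightarrow> real) \<Rightarrow> (nat \<Rightarrow> real) \<Rightarrow> (nat \<Rightarrow> real) \<Rightarrow> real" where
  "exp_score K l p q = (\<Sum>i<K. q i * l p i)"

definition proper :: "nat \<Rightarrow> ((nat \<Rightarrow> real) \<Rightarrow> nat \<Rightarrow> real) \<Rightarrow> bool" where
  "proper K l \<longleftrightarrow> (\<forall>p\<in>simplex K. \<forall>p'\<in>simplex K. exp_score K l p p \<le> exp_score K l p' p)"

definition bounded_proper_rules :: "nat \<Rightarrow> ((nat \<Rightarrow> real) \<Rightarrow> nat \<Rightarrow> real) set" where
  "bounded_proper_rules K = {l. proper K l \<and> (\<forall>p\<in>simplex K. \<forall>i<K. \<bar>l p i\<bar> \<le> 1)}"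

definition empirical :: "nat \<Rightarrow> (nat \<Rightarrow> nat) \<Rightarrow> nat \<Rightarrow> real" where
  "empirical T x = (\<lambda>i. real (card {t\<in>{..<T}. x t = i}) / real T)"

definition Reg :: "nat \<Rightarrow> ((nat \<Rightarrow> real) \<Rightarrow> nat \<Rightarrow> real) \<Rightarrow> (nat \<Rightarrow> nat \<Rightarrow> real) \<Rightarrow> (nat \<Rightarrow> nat) \<Rightarrow> real" where
  "Reg T l p x = (\<Sum>t<T. l (p t) (x t)) - (\<Sum>t<T. l (empirical T x) (x t))"

definition MaxAgentReg :: "nat \<Rightarrow> nat \<Rightarrow> (nat \<Rightarrow> nat \<Rightarrow> real) \<Rightarrow> (nat \<Rightarrow> nat) \<Rightarrow> real" where
  "MaxAgentReg K T p x = (SUP l\<in>bounded_proper_rules K. Reg T l p x)"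

end

theory Submission
  imports Defs "HOL-Library.Infinite_Set"
begin

lemma block_sum:
  fixes g :: "nat \<Rightarrow> real"
  assumes "n > 0"
  shows "(\<Sum>t<m*n. g (t div n)) = real n * (\<Sum>k<m. g k)"
proof -
  have "(\<Sum>t<m*n. g (t div n)) = (\<Sum>k<m. \<Sum>t\<in>{k*n..<k*n+n}. g (t div n))"
    by (rule sum.nat_group[symmetric])
  also have "\<dots> = (\<Sum>k<m. real n * g k)"
  proof (rule sum.cong[OF refl])
    fix k assume "k \<in> {..<m}"
    have hdiv: "\<And>t. t \<in> {k*n..<k*n+n} \<Longrightarrow> t div n = k"
    proof -
      fix t assume "t \<in> {k*n..<k*n+n}"
      then have r: "t = k*n + (t - k*n)" "t - k*n < n" by auto
      have "(k*n + (t - k*n)) div n = k" using r(2) assms by simp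
      then show "t div n = k" using r(1) by simp
    qed
    have "(\<Sum>t\<in>{k*n..<k*n+n}. g (t div n)) = (\<Sum>t\<in>{k*n..<k*n+n}. g k)"
      by (rule sum.cong[OF refl]) (simp add: hdiv)
    then show "(\<Sum>t\<in>{k*n..<k*n+n}. g (t div n)) = real n * g k" by simp
  qed
  also have "\<dots> = real n * (\<Sum>k<m. g k)" by (simp add: sum_distrib_left)
  finally show ?thesis .
qed

lemma card_block:
  assumes "n > 0"
  shows "real (card {t\<in>{..<3*n}. P (t div n)}) = real n * (\<Sum>k<3. if P k then 1 else 0)"
proof -
  have "real (card {t\<in>{..<3*n}. P (t div n)}) = (\<Sum>t<3*n. (if P (t div n) then 1 else 0 :: real))"
    by (simp add: sum.If_cases) (auto intro!: arg_cong[where f=card])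
  also have "\<dots> = real n * (\<Sum>k<3. if P k then 1 else 0)"
    using block_sum[OF assms, of "\<lambda>k. if P k then 1 else 0" 3] by simp
  finally show ?thesis .
qed

definition PP :: "nat \<Rightarrow> nat \<Rightarrow> real" where
  "PP k i = (if k = 0 then (if i = 0 \<or> i = 1 then 1/2 else 0)
            else if k = 1 then (if i = 1 \<or> i = 2 then 1/2 else 0)
            else (if i = 0 \<or> i = 2 then 1/2 else 0))"

definition act :: "(nat \<Rightarrow> real) \<Rightarrow> nat" where
  "act p = (if p 1 \<ge> p 0 \<and> p 1 > p 2 then 1 else if p 2 \<ge> p 1 \<and> p 2 > p 0 then 2 else 0)"

definition LL :: "(nat \<Rightarrow> real) \<Rightarrow> nat \<Rightarrow> real" where
  "LL p i = (if i = act p then -1 else 1)"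

lemma three: "{..<3::nat} = {0,1,2}" by auto

lemma act_max: "act p < 3 \<and> (\<forall>j<3. p j \<le> p (act p))"
proof -
  have h: "p 0 \<le> p (act p) \<and> p 1 \<le> p (act p) \<and> p 2 \<le> p (act p) \<and> act p < 3"
    unfolding act_def by (simp split: if_splits) linarith
  have "\<forall>j<3. p j \<le> p (act p)"
  proof (intro allI impI)
    fix j :: nat assume "j < 3"
    then have "j \<in> {0,1,2}" using three by blast
    then show "p j \<le> p (act p)" using h by blast
  qed
  then show ?thesis using h by blast
qed

lemma sum3: "(\<Sum>k<(3::nat). f k) = f 0 + f 1 + (f 2 :: real)"
  by (simp add: three)

lemma exp_LL: "p \<in> simplex 3 \<Longrightarrow> exp_score 3 LL q p = 1 - 2 * p (act q)"
proof -
  assume p: "p \<in> simplex 3"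
  have s: "p 0 + p 1 + p 2 = 1" using p unfolding simplex_def by (simp add: three)
  have e: "exp_score 3 LL q p = p 0 * LL q 0 + p 1 * LL q 1 + p 2 * LL q 2"
    unfolding exp_score_def by (rule sum3)
  have "act q < 3" using act_max by blast
  then have "act q = 0 \<or> act q = 1 \<or> act q = 2" by auto
  then show ?thesis
  proof (elim disjE)
    assume h: "act q = 0"
    show ?thesis unfolding e LL_def h using s by simp
  next
    assume h: "act q = 1"
    show ?thesis unfolding e LL_def h using s by simp
  next
    assume h: "act q = 2"
    show ?thesis unfolding e LL_def h using s by simp
  qed
qed

lemma LL_proper: "proper 3 LL"
  unfolding proper_def
proof (intro ballI)
  fix p p' :: "nat \<Rightarrow> real" assume p: "p \<in> simplex 3" and "p' \<in> simplex 3"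
  have "act p' < 3" using act_max by blast
  then have "p (act p') \<le> p (act p)" using act_max[of p] by blast
  then show "exp_score 3 LL p p \<le> exp_score 3 LL p' p"
    unfolding exp_LL[OF p] by simp
qed

lemma LL_in: "LL \<in> bounded_proper_rules 3"
  unfolding bounded_proper_rules_def using LL_proper by (simp add: LL_def)

lemma bdd:
  assumes T: "T > 0" and x: "\<forall>t<T. x t < 3" and p: "\<forall>t<T. p t \<in> simplex 3"
    and e: "empirical T x \<in> simplex 3"
  shows "bdd_above ((\<lambda>l. Reg T l p x) ` bounded_proper_rules 3)"
proof (rule bdd_aboveI2)
  fix l assume l: "l \<in> bounded_proper_rules 3"
  then have b: "\<And>q i. q \<in> simplex 3 \<Longrightarrow> i < 3 \<Longrightarrow> \<bar>l q i\<bar> \<le> 1"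
    unfolding bounded_proper_rules_def by auto
  have h1: "\<bar>l (p t) (x t)\<bar> \<le> 1" if "t < T" for t
    using b[of "p t" "x t"] p x that by blast
  have h2: "\<bar>l (empirical T x) (x t)\<bar> \<le> 1" if "t < T" for t
    using b[of "empirical T x" "x t"] e x that by blast
  have "(\<Sum>t<T. l (p t) (x t)) \<le> (\<Sum>t<T. 1)"
    by (rule sum_mono) (use h1 in \<open>simp add: abs_le_iff\<close>)
  moreover have "(\<Sum>t<T. -1) \<le> (\<Sum>t<T. l (empirical T x) (x t))"
    by (rule sum_mono) (use h2 in \<open>simp add: abs_le_iff\<close>)
  ultimately show "Reg T l p x \<le> 2 * real T" unfolding Reg_def by simp
qed

lemma PP_cal: "(k0 = 0 \<or> k0 = 1 \<or> k0 = 2) \<Longrightarrow> (i = 0 \<or> i = 1 \<or> i = 2) \<Longrightarrow> v = PP k0 i \<Longrightarrow>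
   v * (\<Sum>k<3. if PP k i = v then 1 else 0) =
   (\<Sum>k<3. if PP k i = v \<and> k = i then 1 else (0::real))"
  unfolding sum3 by (elim disjE) (simp_all add: PP_def)

theorem theorem5p5:
  shows "\<exists>c>0. infinite {T::nat. \<exists>(x::nat \<Rightarrow> nat) (p::nat \<Rightarrow> nat \<Rightarrow> real).
            (\<forall>t<T. x t < 3) \<and> (\<forall>t<T. p t \<in> simplex 3) \<and>
            (\<forall>i<3. Cal T (\<lambda>t. p t i) (\<lambda>t. x t = i) = 0) \<and>
            MaxAgentReg 3 T p x \<ge> c * real T}"
proof (intro exI conjI)
  show "(2/3::real) > 0" by simp
  show "infinite {T::nat. \<exists>(x::nat \<Rightarrow> nat) (p::nat \<Rightarrow> nat \<Rightarrow> real).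
            (\<forall>t<T. x t < 3) \<and> (\<forall>t<T. p t \<in> simplex 3) \<and>
            (\<forall>i<3. Cal T (\<lambda>t. p t i) (\<lambda>t. x t = i) = 0) \<and>
            MaxAgentReg 3 T p x \<ge> 2/3 * real T}"
    unfolding infinite_nat_iff_unbounded_le
  proof (intro allI)
    fix m :: nat
    define n where "n = Suc m"
    have n: "n > 0" by (simp add: n_def)
    define T where "T = 3 * n"
    define x where "x = (\<lambda>t::nat. t div n)"
    define p where "p = (\<lambda>t::nat. PP (t div n))"
    have x3: "\<forall>t<T. x t < 3" unfolding x_def T_def
      by (simp add: less_mult_imp_div_less)
    have PPs: "k < 3 \<Longrightarrow> PP k \<in> simplex 3" for k
      by (auto simp: simplex_def PP_def three less_Suc_eq numeral_3_eq_3)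
    have ps: "\<forall>t<T. p t \<in> simplex 3"
      using x3 PPs unfolding p_def x_def by simp
    have emp: "empirical T x = (\<lambda>i. if i < 3 then 1/3 else 0)"
    proof
      fix i
      have "real (card {t\<in>{..<T}. x t = i}) = real n * (\<Sum>k<3. if k = i then 1 else 0)"
        unfolding T_def x_def by (rule card_block[OF n])
      also have "\<dots> = (if i < 3 then real n else 0)"
        by (auto simp: three)
      finally show "empirical T x i = (if i < 3 then 1/3 else 0)"
        unfolding empirical_def using n by (simp add: T_def)
    qed
    have es: "empirical T x \<in> simplex 3"
      unfolding emp simplex_def by (simp add: three)
    have Tpos: "T > 0" using n T_def by simp
    have cal: "\<forall>i<3. Cal T (\<lambda>t. p t i) (\<lambda>t. x t = i) = 0"
    proof (intro allI impI)
      fix i :: nat assume i: "i < 3"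
      show "Cal T (\<lambda>t. p t i) (\<lambda>t. x t = i) = 0"
        unfolding Cal_def
      proof (rule sum.neutral, rule ballI)
        fix v assume "v \<in> (\<lambda>t. p t i) ` {..<T}"
        then obtain t0 where t0: "t0 < T" "v = PP (t0 div n) i" unfolding p_def by auto
        have k0: "t0 div n < 3" using t0 x3 x_def by simp
        have c1: "real (card {t\<in>{..<T}. p t i = v}) = real n * (\<Sum>k<3. if PP k i = v then 1 else 0)"
          unfolding T_def p_def by (rule card_block[OF n])
        have c2: "real (card {t\<in>{..<T}. p t i = v \<and> x t = i}) =
             real n * (\<Sum>k<3. if PP k i = v \<and> k = i then 1 else 0)"
          unfolding T_def p_def x_def by (rule card_block[OF n])
        have "v * (\<Sum>k<3. if PP k i = v then 1 else 0) = (\<Sum>k<3. if PP k i = v \<and> k = i then 1 else 0)"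
        proof -
          have "t0 div n = 0 \<or> t0 div n = 1 \<or> t0 div n = 2" using k0 by auto
          moreover have "i = 0 \<or> i = 1 \<or> i = 2" using i by auto
          ultimately show ?thesis using t0(2) PP_cal by blast
        qed
        note eq = this
        have "v * real (card {t\<in>{..<T}. p t i = v}) = real (card {t\<in>{..<T}. p t i = v \<and> x t = i})"
          unfolding c1 c2 eq[symmetric] by (simp only: ac_simps)
        then show "\<bar>v * real (card {t\<in>{..<T}. p t i = v}) - real (card {t\<in>{..<T}. p t i = v \<and> x t = i})\<bar> = 0"
          by simp
      qed
    qed
    have r1: "(\<Sum>t<T. LL (p t) (x t)) = real n * 3"
    proof -
      have "(\<Sum>t<T. LL (p t) (x t)) = (\<Sum>t<3*n. (\<lambda>k. LL (PP k) k) (t div n))"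
        unfolding T_def p_def x_def by simp
      also have "\<dots> = real n * (\<Sum>k<3. LL (PP k) k)" by (rule block_sum[OF n])
      also have "\<dots> = real n * 3" by (simp add: three LL_def act_def PP_def)
      finally show ?thesis .
    qed
    have r2: "(\<Sum>t<T. LL (empirical T x) (x t)) = real n * 1"
    proof -
      have "(\<Sum>t<T. LL (empirical T x) (x t)) = (\<Sum>t<3*n. (\<lambda>k. LL (empirical T x) k) (t div n))"
        unfolding T_def x_def by simp
      also have "\<dots> = real n * (\<Sum>k<3. LL (empirical T x) k)" by (rule block_sum[OF n])
      also have "\<dots> = real n * 1" by (simp add: three LL_def act_def emp)
      finally show ?thesis .
    qed
    have "2/3 * real T \<le> Reg T LL p x"
      unfolding Reg_def r1 r2 by (simp add: T_def)
    also have "\<dots> \<le> MaxAgentReg 3 T p x"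
      unfolding MaxAgentReg_def
      by (rule cSUP_upper[OF LL_in bdd[OF Tpos x3 ps es]])
    finally have "2/3 * real T \<le> MaxAgentReg 3 T p x" .
    moreover have "T \<ge> m" unfolding T_def n_def by simp
    ultimately show "\<exists>T'\<ge>m. T' \<in> {T::nat. \<exists>(x::nat \<Rightarrow> nat) (p::nat \<Rightarrow> nat \<Rightarrow> real).
            (\<forall>t<T. x t < 3) \<and> (\<forall>t<T. p t \<in> simplex 3) \<and>
            (\<forall>i<3. Cal T (\<lambda>t. p t i) (\<lambda>t. x t = i) = 0) \<and>
            MaxAgentReg 3 T p x \<ge> 2/3 * real T}"
      using x3 ps cal by blast
  qed
qed

end
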